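(* If $A,B,C,X$ are $N\times N$ real symmetric positive semidefinite matrices, then \[ \det(A+X)+\det(B+X)+\det(C+X)+\det(A+B+C+X)\geq\det(A+B+X)+\det(B+C+X)+\det(C+A+X)+\det X. \] *)

theory Defs
  imports "HOL-Analysis.Analysis"
begin

definition psd_matrix :: "real ^ 'n ^ 'n \<Rightarrow> bool" where
  "psd_matrix A \<longleftrightarrow> transpose A = A \<and> (\<forall>x :: real ^ 'n. 0 \<le> x \<bullet> (A *v x))"

end

theory Submission
  imports Defs
begin


definition outer :: "real^'n \<Rightarrow> real^'n^'n" where
  "outer v = (\<chi> i j. v$i * v$j)"

lemma quad_disc:
  fixes a b c :: real
  assumes h: "\<And>t. 0 \<le> a*t^2 + 2*b*t + c" and a: "0 \<le> a"
  shows "b^2 \<le> a*c"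
proof (cases "a = 0")
  case True
  have "b = 0"
  proof (rule ccontr)
    assume b: "b \<noteq> 0"
    have "0 \<le> a*(-(c+1)/(2*b))^2 + 2*b*(-(c+1)/(2*b)) + c" by (rule h)
    also have "\<dots> = -1" using True b by (simp add: field_simps)
    finally show False by simp
  qed
  then show ?thesis using True by simp
next
  case False
  then have ap: "a > 0" using a by simp
  have "0 \<le> a*(-b/a)^2 + 2*b*(-b/a) + c" by (rule h)
  also have "\<dots> = c - b^2/a" using ap by (simp add: field_simps power2_eq_square)
  finally have "b^2/a \<le> c" by simp
  then show ?thesis using ap by (simp add: field_simps)
qed

lemma psd_sym: "psd_matrix A \<Longrightarrow> x \<bullet> (A *v y) = y \<bullet> (A *v x)"
  unfolding psd_matrix_def
  by (metis dot_lmul_matrix inner_commute transpose_matrix_vector)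

lemma axis_inner_mat: "x \<bullet> (A *v axis i 1) = (\<Sum>j\<in>UNIV. x$j * A$j$i)"
  by (simp add: inner_vec_def matrix_vector_mult_def axis_def if_distrib cong: if_cong)

lemma axis_mat_axis: "axis i 1 \<bullet> ((A::real^'n^'n) *v axis i 1) = A$i$i"
  proof -
  have "(\<Sum>j\<in>UNIV. (axis i 1::real^'n)$j * A$j$i) = (\<Sum>j\<in>UNIV. if j = i then A$j$i else 0)"
    by (rule sum.cong) (auto simp: axis_def)
  then show ?thesis unfolding axis_inner_mat by simp
qed

lemma psd_cs:
  assumes A: "psd_matrix (A::real^'n^'n)"
  shows "(x \<bullet> (A *v axis i 1))^2 \<le> A$i$i * (x \<bullet> (A *v x))"
proof -
  let ?e = "axis i (1::real) :: real^'n"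
  have "0 \<le> A$i$i * t^2 + 2 * (x \<bullet> (A *v ?e)) * t + x \<bullet> (A *v x)" for t
  proof -
    have "0 \<le> (x + t *s ?e) \<bullet> (A *v (x + t *s ?e))" using A unfolding psd_matrix_def by blast
    also have "\<dots> = x \<bullet> (A *v x) + t * (x \<bullet> (A *v ?e)) + t * (?e \<bullet> (A *v x)) + t*t*(?e \<bullet> (A *v ?e))"
      by (simp add: matrix_vector_right_distrib inner_add_left inner_add_right
            scalar_mult_eq_scaleR matrix_vector_mult_scaleR algebra_simps)
    also have "\<dots> = A$i$i * t^2 + 2 * (x \<bullet> (A *v ?e)) * t + x \<bullet> (A *v x)"
      using psd_sym[OF A, of ?e x] by (simp add: axis_mat_axis power2_eq_square algebra_simps)
    finally show ?thesis .
  qed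
  moreover have "0 \<le> A$i$i" using A axis_mat_axis[of i A] unfolding psd_matrix_def by metis
  ultimately show ?thesis using quad_disc by blast
qed

lemma axis_mat_axis2: "axis i 1 \<bullet> ((A::real^'n^'n) *v axis j 1) = A$i$j"
proof -
  have "(\<Sum>k\<in>UNIV. (axis i 1::real^'n)$k * A$k$j) = (\<Sum>k\<in>UNIV. if k = i then A$k$j else 0)"
    by (rule sum.cong) (auto simp: axis_def)
  then show ?thesis unfolding axis_inner_mat by simp
qed

lemma psd_diag_nonneg: "psd_matrix (A::real^'n^'n) \<Longrightarrow> 0 \<le> A$i$i"
  using axis_mat_axis[of i A] unfolding psd_matrix_def by metis

lemma psd_zero_diag:
  assumes A: "psd_matrix (A::real^'n^'n)" and z: "A$j$j = 0"
  shows "A$i$j = 0" "A$j$i = 0"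
proof -
  have "(axis i 1 \<bullet> (A *v axis j 1))^2 \<le> A$j$j * (axis i 1 \<bullet> (A *v axis i 1))"
    by (rule psd_cs[OF A])
  then show *: "A$i$j = 0" using z by (simp add: axis_mat_axis2)
  have "A$j$i = transpose A $ j $ i" using A unfolding psd_matrix_def by simp
  then show "A$j$i = 0" using * by (simp add: transpose_def)
qed

lemma outer_mult: "outer c *v x = (c \<bullet> x) *\<^sub>R c"
  by (simp add: outer_def vec_eq_iff matrix_vector_mult_def inner_vec_def sum_distrib_left algebra_simps)

lemma outer_quad: "x \<bullet> (outer c *v x) = (x \<bullet> c)^2"
  by (simp add: outer_mult power2_eq_square inner_commute)

lemma outer_scale: "outer (r *\<^sub>R c) = r^2 *\<^sub>R outer c"
  by (simp add: outer_def vec_eq_iff power2_eq_square)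

lemma psd_step:
  assumes A: "psd_matrix (A::real^'n^'n)" and pos: "A$i$i \<noteq> 0"
  defines "c \<equiv> A *v axis i 1"
  defines "B \<equiv> A - (1 / A$i$i) *\<^sub>R outer c"
  shows "psd_matrix B" "card {j. B$j$j \<noteq> 0} < card {j. A$j$j \<noteq> 0}"
    "A = B + outer ((1 / sqrt (A$i$i)) *\<^sub>R c)"
proof -
  have ap: "A$i$i > 0" using psd_diag_nonneg[OF A, of i] pos by simp
  have cj: "c$j = A$j$i" for j
    by (simp add: c_def matrix_vector_mult_def axis_def if_distrib cong: if_cong)
  have tA: "transpose A = A" using A unfolding psd_matrix_def by simp
  have tB: "transpose B = B"
    using tA unfolding B_def by (simp add: vec_eq_iff transpose_def outer_def mult.commute)
  have "0 \<le> x \<bullet> (B *v x)" for x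
  proof -
    have "x \<bullet> (B *v x) = x \<bullet> (A *v x) - (x \<bullet> c)^2 / A$i$i"
      unfolding B_def by (simp add: matrix_vector_mult_diff_rdistrib scalar_mult_eq_scaleR
         inner_diff_right outer_quad scaleR_matrix_vector_assoc[symmetric])
    moreover have "(x \<bullet> c)^2 \<le> A$i$i * (x \<bullet> (A *v x))"
      unfolding c_def by (rule psd_cs[OF A])
    ultimately have "0 \<le> A$i$i * (x \<bullet> (B *v x))" using ap by (simp add: field_simps)
    then show ?thesis using ap by (simp add: zero_le_mult_iff)
  qed
  then show "psd_matrix B" using tB unfolding psd_matrix_def by simp
  have Bjj: "B$j$j = A$j$j - (A$j$i)^2 / A$i$i" for j
    unfolding B_def by (simp add: outer_def cj power2_eq_square)
  have "{j. B$j$j \<noteq> 0} \<subseteq> {j. A$j$j \<noteq> 0} - {i}"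
  proof
    fix j assume "j \<in> {j. B$j$j \<noteq> 0}"
    then have h: "B$j$j \<noteq> 0" by simp
    have "j \<noteq> i" using h ap by (auto simp: Bjj power2_eq_square)
    moreover have "A$j$j \<noteq> 0" using h psd_zero_diag(2)[OF A, of j i] by (auto simp: Bjj)
    ultimately show "j \<in> {j. A$j$j \<noteq> 0} - {i}" by simp
  qed
  moreover have "card ({j. A$j$j \<noteq> 0} - {i}) < card {j. A$j$j \<noteq> 0}"
    using pos by (intro psubset_card_mono) auto
  ultimately show "card {j. B$j$j \<noteq> 0} < card {j. A$j$j \<noteq> 0}"
    by (meson card_mono finite le_less_trans)
  show "A = B + outer ((1 / sqrt (A$i$i)) *\<^sub>R c)"
    unfolding B_def outer_scale using ap by (simp add: power_divide)
qed

lemma psd_decomp: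
  "psd_matrix (A::real^'n^'n) \<Longrightarrow> \<exists>u (m::nat). A = (\<Sum>k<m. outer (u k))"
proof (induction "card {j. A$j$j \<noteq> 0}" arbitrary: A rule: less_induct)
  case less
  show ?case
  proof (cases "\<exists>i. A$i$i \<noteq> 0")
    case False
    then have "A = 0" using psd_zero_diag(1)[OF less.prems] by (auto simp: vec_eq_iff)
    then have "\<forall>u. A = (\<Sum>k<(0::nat). outer (u k))" by simp
    then show ?thesis by blast
  next
    case True
    then obtain i where i: "A$i$i \<noteq> 0" by blast
    note st = psd_step[OF less.prems i]
    obtain u and m :: nat where um: "A - (1 / A$i$i) *\<^sub>R outer (A *v axis i 1) = (\<Sum>k<m. outer (u k))"
      using less.hyps[OF st(2) st(1)] by blast
    let ?v = "(1 / sqrt (A$i$i)) *\<^sub>R (A *v axis i 1)"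
    have "A = (\<Sum>k<Suc m. outer ((u(m := ?v)) k))"
      using st(3) um by simp
    then show ?thesis by blast
  qed
qed



definition W :: "('k \<Rightarrow> real^'n) \<Rightarrow> ('n \<Rightarrow> 'k) \<Rightarrow> real" where
  "W u g = (\<Prod>i\<in>UNIV. u (g i) $ i) * det (\<chi> i. u (g i))"

lemma finite_funs: "finite K \<Longrightarrow> finite {g::'n::finite \<Rightarrow> 'k. \<forall>i. g i \<in> K}"
  using finite_set_of_finite_funs[of "UNIV::'n set" K undefined] by simp

lemma det_linear_rows_sum_gen_lemma:
  fixes S :: "'k set"
  assumes fS: "finite S"
    and fT: "finite T"
  shows "det ((\<chi> i. if i \<in> T then sum (a i) S else c i):: real^'n^'n) =
    sum (\<lambda>f. det((\<chi> i. if i \<in> T then a i (f i) else c i)::real^'n^'n))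
      {f. (\<forall>i \<in> T. f i \<in> S) \<and> (\<forall>i. i \<notin> T \<longrightarrow> f i = undefined)}"
  using fT
proof (induct T arbitrary: a c set: finite)
  case empty
  have th0: "\<And>x y. (\<chi> i. if i \<in> {} then x i else y i) = (\<chi> i. y i)"
    by vector
  have th1: "{f. \<forall>i. f i = undefined} = {\<lambda>_. undefined}" by auto
  show ?case
    unfolding th0 by (simp add: th1)
next
  case (insert z T a c)
  let ?F = "\<lambda>T. {f. (\<forall>i \<in> T. f i \<in> S) \<and> (\<forall>i. i \<notin> T \<longrightarrow> f i = undefined)}"
  let ?h = "\<lambda>(y,g) i. if i = z then y else g i"
  let ?k = "\<lambda>h. (h(z),(\<lambda>i. if i = z then undefined else h i))"
  have thif: "\<And>a b c d. (if a \<or> b then c else d) = (if a then c else if b then c else d)"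
    by simp
  have thif2: "\<And>a b c d e. (if a then b else if c then d else e) =
     (if c then (if a then b else d) else (if a then b else e))"
    by simp
  from \<open>z \<notin> T\<close> have nz: "\<And>i. i \<in> T \<Longrightarrow> i \<noteq> z"
    by auto
  have "det (\<chi> i. if i \<in> insert z T then sum (a i) S else c i) =
    det (\<chi> i. if i = z then sum (a i) S else if i \<in> T then sum (a i) S else c i)"
    unfolding insert_iff thif ..
  also have "\<dots> = (\<Sum>j\<in>S. det (\<chi> i. if i \<in> T then sum (a i) S else if i = z then a i j else c i))"
    unfolding det_linear_row_sum[OF fS]
    by (subst thif2) (simp add: nz cong: if_cong)
  finally have tha:
    "det (\<chi> i. if i \<in> insert z T then sum (a i) S else c i) =
     (\<Sum>(j, f)\<in>S \<times> ?F T. det (\<chi> i. if i \<in> T then a i (f i)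
                                else if i = z then a i j
                                else c i))"
    unfolding insert.hyps unfolding sum.cartesian_product by blast
  show ?case unfolding tha
    using \<open>z \<notin> T\<close>
    by (intro sum.reindex_bij_witness[where i="?k" and j="?h"])
       (auto intro!: cong[OF refl[of det]] simp: vec_eq_iff)
qed

lemma det_linear_rows_sum_gen:
  fixes S :: "'k set"
  assumes fS: "finite S"
  shows "det (\<chi> i. sum (a i) S) =
    sum (\<lambda>f. det (\<chi> i. a i (f i) :: real ^ 'n^'n)) {f. \<forall>i. f i \<in> S}"
proof -
  have th0: "\<And>x y. ((\<chi> i. if i \<in> (UNIV:: 'n set) then x i else y i) :: real^'n^'n) = (\<chi> i. x i)"
    by vector
  from det_linear_rows_sum_gen_lemma[OF fS, of "UNIV :: 'n set" a, unfolded th0, OF finite]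
  show ?thesis by simp
qed

lemma det_outer_sum:
  fixes u :: "'k \<Rightarrow> real^'n"
  assumes fK: "finite K"
  shows "det (\<Sum>k\<in>K. outer (u k)) = (\<Sum>g\<in>{g. \<forall>i. g i \<in> K}. W u g)"
proof -
  have "(\<Sum>k\<in>K. outer (u k)) = (\<chi> i. \<Sum>k\<in>K. (u k $ i) *s u k)"
    by (simp add: vec_eq_iff outer_def sum_component)
  then have "det (\<Sum>k\<in>K. outer (u k)) = (\<Sum>g\<in>{g. \<forall>i. g i \<in> K}. det (\<chi> i. (u (g i) $ i) *s u (g i)))"
    using det_linear_rows_sum_gen[OF fK, where a = "\<lambda>i k. (u k $ i) *s u k"] by simp
  also have "\<dots> = (\<Sum>g\<in>{g. \<forall>i. g i \<in> K}. W u g)"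
    by (simp add: W_def det_rows_mul)
  finally show ?thesis .
qed

lemma perm_sum:
  fixes u :: "'k \<Rightarrow> real^'n"
  shows "(\<Sum>p\<in>{p. p permutes (UNIV::'n set)}. W u (g \<circ> p)) = (det (\<chi> i. u (g i)))^2"
proof -
  define V where "V = (\<chi> i. u (g i))"
  have "(\<Sum>p\<in>{p. p permutes (UNIV::'n set)}. W u (g \<circ> p))
      = (\<Sum>p\<in>{p. p permutes (UNIV::'n set)}. det V * (of_int (sign p) * (\<Prod>i\<in>UNIV. transpose V $ i $ p i)))"
  proof (rule sum.cong)
    fix p assume "p \<in> {p. p permutes (UNIV::'n set)}"
    then have p: "p permutes (UNIV::'n set)" by simp
    have "det (\<chi> i. u ((g \<circ> p) i)) = det (\<chi> i. V $ p i)" by (simp add: V_def)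
    also have "\<dots> = of_int (sign p) * det V" by (rule det_permute_rows[OF p])
    finally show "W u (g \<circ> p) = det V * (of_int (sign p) * (\<Prod>i\<in>UNIV. transpose V $ i $ p i))"
      by (simp add: W_def transpose_def V_def)
  qed simp
  also have "\<dots> = det V * det (transpose V)"
    by (simp only: det_def[of "transpose V"] sum_distrib_left)
  also have "\<dots> = (det V)^2" by (simp add: power2_eq_square)
  finally show ?thesis by (simp add: V_def)
qed

lemma W_sum_nonneg:
  fixes u :: "'k \<Rightarrow> real^'n"
  assumes fG: "finite G"
    and cl: "\<And>g p. g \<in> G \<Longrightarrow> p permutes (UNIV::'n set) \<Longrightarrow> g \<circ> p \<in> G"
  shows "0 \<le> (\<Sum>g\<in>G. W u g)"
proof -
  let ?P = "{p. p permutes (UNIV::'n set)}"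
  have fP: "finite ?P" by (rule finite_permutations) simp
  have "id \<in> ?P" by (simp add: permutes_id)
  then have cP: "card ?P > 0" using fP card_gt_0_iff by blast
  have re: "(\<Sum>g\<in>G. W u (g \<circ> p)) = (\<Sum>g\<in>G. W u g)" if p: "p permutes (UNIV::'n set)" for p
  proof (rule sum.reindex_bij_witness[where i = "\<lambda>g. g \<circ> inv p" and j = "\<lambda>g. g \<circ> p"])
    have ip: "inv p permutes (UNIV::'n set)" using permutes_inv[OF p] .
    show "\<And>a. a \<in> G \<Longrightarrow> a \<circ> inv p \<circ> p = a"
      using permutes_inv_o(2)[OF p] by (simp add: o_assoc[symmetric])
    show "\<And>a. a \<in> G \<Longrightarrow> a \<circ> inv p \<in> G" using cl ip by blast
    show "\<And>a. a \<in> G \<Longrightarrow> a \<circ> p \<circ> inv p = a"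
      using permutes_inv_o(1)[OF p] by (simp add: o_assoc[symmetric])
    show "\<And>a. a \<in> G \<Longrightarrow> a \<circ> p \<in> G" using cl p by blast
    show "\<And>a. a \<in> G \<Longrightarrow> W u (a \<circ> p) = W u (a \<circ> p)" by simp
  qed
  have "of_nat (card ?P) * (\<Sum>g\<in>G. W u g) = (\<Sum>p\<in>?P. \<Sum>g\<in>G. W u (g \<circ> p))"
    using re by simp
  also have "\<dots> = (\<Sum>g\<in>G. \<Sum>p\<in>?P. W u (g \<circ> p))" by (rule sum.swap)
  also have "\<dots> = (\<Sum>g\<in>G. (det (\<chi> i. u (g i)))^2)" by (simp add: perm_sum)
  also have "\<dots> \<ge> 0" by (simp add: sum_nonneg)
  finally have h: "0 \<le> real (card ?P) * (\<Sum>g\<in>G. W u g)" .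
  have "real (card ?P) > 0" using cP by simp
  then show ?thesis using h mult_le_cancel_left_pos[of "real (card ?P)" 0 "\<Sum>g\<in>G. W u g"] by simp
qed



lemma main_comb:
  fixes u :: "'k \<Rightarrow> real^'n"
  assumes fin: "finite KX" "finite KA" "finite KB" "finite KC"
    and dj: "KX \<inter> KA = {}" "KX \<inter> KB = {}" "KX \<inter> KC = {}" "KA \<inter> KB = {}" "KA \<inter> KC = {}" "KB \<inter> KC = {}"
  defines "M \<equiv> \<lambda>S. (\<Sum>k\<in>S. outer (u k))"
  shows "det (M (KA \<union> KB \<union> KX)) + det (M (KB \<union> KC \<union> KX)) + det (M (KC \<union> KA \<union> KX)) + det (M KX)
     \<le> det (M (KA \<union> KX)) + det (M (KB \<union> KX)) + det (M (KC \<union> KX)) + det (M (KA \<union> KB \<union> KC \<union> KX))"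
proof -
  define K where "K = KA \<union> KB \<union> KC \<union> KX"
  define FF where "FF = (\<lambda>S. {g::'n \<Rightarrow> 'k. \<forall>i. g i \<in> S})"
  have fK: "finite K" using fin by (simp add: K_def)
  have fFF: "finite (FF K)" unfolding FF_def by (rule finite_funs[OF fK])
  have D0: "det (M S) = (\<Sum>g\<in>FF K. if g \<in> FF S then W u g else 0)" if "S \<subseteq> K" for S
  proof -
    have fS: "finite S" using that fK finite_subset by blast
    have "FF K \<inter> FF S = FF S" using that unfolding FF_def by auto
    then show ?thesis
      using det_outer_sum[OF fS, of u] sum.inter_restrict[OF fFF, of "W u" "FF S"]
      unfolding M_def FF_def by simp
  qed
  have sub: "KA \<union> KX \<subseteq> K" "KB \<union> KX \<subseteq> K" "KC \<union> KX \<subseteq> K" "KA \<union> KB \<union> KC \<union> KX \<subseteq> K"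
    "KA \<union> KB \<union> KX \<subseteq> K" "KB \<union> KC \<union> KX \<subseteq> K" "KC \<union> KA \<union> KX \<subseteq> K" "KX \<subseteq> K"
    unfolding K_def by blast+
  note D = D0[OF sub(1)] D0[OF sub(2)] D0[OF sub(3)] D0[OF sub(4)] D0[OF sub(5)] D0[OF sub(6)] D0[OF sub(7)] D0[OF sub(8)]
  define a where "a = (\<lambda>g::'n \<Rightarrow> 'k. \<exists>i. g i \<in> KA)"
  define b where "b = (\<lambda>g::'n \<Rightarrow> 'k. \<exists>i. g i \<in> KB)"
  define c where "c = (\<lambda>g::'n \<Rightarrow> 'k. \<exists>i. g i \<in> KC)"
  define G where "G = {g \<in> FF K. a g \<and> b g \<and> c g}"
  have m1: "g \<in> FF (KA \<union> KX) \<longleftrightarrow> \<not> b g \<and> \<not> c g" if g: "g \<in> FF K" for g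
  proof -
    have "g i \<in> KA \<union> KX \<longleftrightarrow> g i \<notin> KB \<and> g i \<notin> KC" for i using g dj unfolding FF_def K_def by auto
    then show ?thesis unfolding FF_def b_def c_def by auto
  qed
  have m2: "g \<in> FF (KB \<union> KX) \<longleftrightarrow> \<not> a g \<and> \<not> c g" if g: "g \<in> FF K" for g
  proof -
    have "g i \<in> KB \<union> KX \<longleftrightarrow> g i \<notin> KA \<and> g i \<notin> KC" for i using g dj unfolding FF_def K_def by auto
    then show ?thesis unfolding FF_def a_def c_def by auto
  qed
  have m3: "g \<in> FF (KC \<union> KX) \<longleftrightarrow> \<not> a g \<and> \<not> b g" if g: "g \<in> FF K" for g
  proof -
    have "g i \<in> KC \<union> KX \<longleftrightarrow> g i \<notin> KA \<and> g i \<notin> KB" for i using g dj unfolding FF_def K_def by auto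
    then show ?thesis unfolding FF_def a_def b_def by auto
  qed
  have m4: "g \<in> FF (KA \<union> KB \<union> KX) \<longleftrightarrow> \<not> c g" if g: "g \<in> FF K" for g
  proof -
    have "g i \<in> KA \<union> KB \<union> KX \<longleftrightarrow> g i \<notin> KC" for i using g dj unfolding FF_def K_def by auto
    then show ?thesis unfolding FF_def c_def by auto
  qed
  have m5: "g \<in> FF (KB \<union> KC \<union> KX) \<longleftrightarrow> \<not> a g" if g: "g \<in> FF K" for g
  proof -
    have "g i \<in> KB \<union> KC \<union> KX \<longleftrightarrow> g i \<notin> KA" for i using g dj unfolding FF_def K_def by auto
    then show ?thesis unfolding FF_def a_def by auto
  qed
  have m6: "g \<in> FF (KC \<union> KA \<union> KX) \<longleftrightarrow> \<not> b g" if g: "g \<in> FF K" for g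
  proof -
    have "g i \<in> KC \<union> KA \<union> KX \<longleftrightarrow> g i \<notin> KB" for i using g dj unfolding FF_def K_def by auto
    then show ?thesis unfolding FF_def b_def by auto
  qed
  have m7: "g \<in> FF KX \<longleftrightarrow> \<not> a g \<and> \<not> b g \<and> \<not> c g" if "g \<in> FF K" for g
    using that dj unfolding FF_def K_def a_def b_def c_def by blast
  have m8: "g \<in> FF (KA \<union> KB \<union> KC \<union> KX)" if "g \<in> FF K" for g
    using that unfolding K_def .
  have "det (M (KA \<union> KX)) + det (M (KB \<union> KX)) + det (M (KC \<union> KX)) + det (M (KA \<union> KB \<union> KC \<union> KX))
     - (det (M (KA \<union> KB \<union> KX)) + det (M (KB \<union> KC \<union> KX)) + det (M (KC \<union> KA \<union> KX)) + det (M KX))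
     = (\<Sum>g\<in>FF K. (if g \<in> FF (KA \<union> KX) then W u g else 0) + (if g \<in> FF (KB \<union> KX) then W u g else 0)
          + (if g \<in> FF (KC \<union> KX) then W u g else 0) + (if g \<in> FF (KA \<union> KB \<union> KC \<union> KX) then W u g else 0)
          - ((if g \<in> FF (KA \<union> KB \<union> KX) then W u g else 0) + (if g \<in> FF (KB \<union> KC \<union> KX) then W u g else 0)
          + (if g \<in> FF (KC \<union> KA \<union> KX) then W u g else 0) + (if g \<in> FF KX then W u g else 0)))"
    unfolding D
    by (simp only: sum.distrib sum_subtractf)
  also have "\<dots> = (\<Sum>g\<in>FF K. if g \<in> G then W u g else 0)"
  proof (rule sum.cong[OF refl])
    fix g assume g: "g \<in> FF K"
    show "(if g \<in> FF (KA \<union> KX) then W u g else 0) + (if g \<in> FF (KB \<union> KX) then W u g else 0)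
          + (if g \<in> FF (KC \<union> KX) then W u g else 0) + (if g \<in> FF (KA \<union> KB \<union> KC \<union> KX) then W u g else 0)
          - ((if g \<in> FF (KA \<union> KB \<union> KX) then W u g else 0) + (if g \<in> FF (KB \<union> KC \<union> KX) then W u g else 0)
          + (if g \<in> FF (KC \<union> KA \<union> KX) then W u g else 0) + (if g \<in> FF KX then W u g else 0))
          = (if g \<in> G then W u g else 0)"
      unfolding m1[OF g] m2[OF g] m3[OF g] m4[OF g] m5[OF g] m6[OF g] m7[OF g]
      using m8[OF g] g unfolding G_def
      by (cases "a g"; cases "b g"; cases "c g") simp_all
  qed
  also have "\<dots> = (\<Sum>g\<in>G. W u g)"
  proof -
    have "FF K \<inter> G = G" unfolding G_def by auto
    then show ?thesis using sum.inter_restrict[OF fFF, of "W u" G] by simp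
  qed
  also have "\<dots> \<ge> 0"
  proof (rule W_sum_nonneg)
    show "finite G" using fFF unfolding G_def by simp
    fix g and p :: "'n \<Rightarrow> 'n"
    assume g: "g \<in> G" and p: "p permutes UNIV"
    have ex: "\<exists>i. (g \<circ> p) i \<in> S" if "\<exists>i. g i \<in> S" for S
    proof -
      from that obtain i where "g i \<in> S" by blast
      then have "(g \<circ> p) (inv p i) \<in> S" using permutes_inverses(1)[OF p] by simp
      then show ?thesis by blast
    qed
    show "g \<circ> p \<in> G" using g ex unfolding G_def FF_def a_def b_def c_def by auto
  qed
  finally show ?thesis by simp
qed



lemma sum_tag:
  fixes u :: "nat \<times> nat \<Rightarrow> real^'n"
  shows "(\<Sum>k\<in>{t}\<times>{..<m}. outer (u k)) = (\<Sum>k<m. outer (u (t, k)))"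
proof -
  have "{t}\<times>{..<m} = Pair t ` {..<m}" by auto
  moreover have "inj_on (Pair t) {..<m}" by (simp add: inj_on_def)
  ultimately show ?thesis by (simp add: sum.reindex)
qed

theorem lemma5p5:
  fixes A B C X :: "real ^ 'n ^ 'n"
  assumes "psd_matrix A" and "psd_matrix B" and "psd_matrix C" and "psd_matrix X"
  shows "det (A + X) + det (B + X) + det (C + X) + det (A + B + C + X)
           \<ge> det (A + B + X) + det (B + C + X) + det (C + A + X) + det X"
proof -
  obtain uA and mA :: nat where hA: "A = (\<Sum>k<mA. outer (uA k))" using psd_decomp[OF assms(1)] by blast
  obtain uB and mB :: nat where hB: "B = (\<Sum>k<mB. outer (uB k))" using psd_decomp[OF assms(2)] by blast
  obtain uC and mC :: nat where hC: "C = (\<Sum>k<mC. outer (uC k))" using psd_decomp[OF assms(3)] by blast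
  obtain uX and mX :: nat where hX: "X = (\<Sum>k<mX. outer (uX k))" using psd_decomp[OF assms(4)] by blast
  define u :: "nat \<times> nat \<Rightarrow> real^'n" where
    "u = (\<lambda>(t,k). if t = 0 then uX k else if t = 1 then uA k else if t = 2 then uB k else uC k)"
  define KX where "KX = {0::nat} \<times> {..<mX}"
  define KA where "KA = {1::nat} \<times> {..<mA}"
  define KB where "KB = {2::nat} \<times> {..<mB}"
  define KC where "KC = {3::nat} \<times> {..<mC}"
  define M where "M = (\<lambda>S. (\<Sum>k\<in>S. outer (u k)))"
  have MX: "M KX = X" unfolding M_def KX_def sum_tag hX by (simp add: u_def)
  have MA: "M KA = A" unfolding M_def KA_def sum_tag hA by (simp add: u_def)
  have MB: "M KB = B" unfolding M_def KB_def sum_tag hB by (simp add: u_def)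
  have MC: "M KC = C" unfolding M_def KC_def sum_tag hC by (simp add: u_def)
  have fin: "finite KX" "finite KA" "finite KB" "finite KC"
    by (simp_all add: KX_def KA_def KB_def KC_def)
  have dj: "KX \<inter> KA = {}" "KX \<inter> KB = {}" "KX \<inter> KC = {}" "KA \<inter> KB = {}" "KA \<inter> KC = {}" "KB \<inter> KC = {}"
    by (auto simp: KX_def KA_def KB_def KC_def)
  have Mun: "M (S \<union> T) = M S + M T" if "finite S" "finite T" "S \<inter> T = {}" for S T
    unfolding M_def using that by (simp add: sum.union_disjoint)
  have e1: "M (KA \<union> KX) = A + X" using Mun fin dj MA MX by (simp add: Int_commute)
  have e2: "M (KB \<union> KX) = B + X" using Mun fin dj MB MX by (simp add: Int_commute)
  have e3: "M (KC \<union> KX) = C + X" using Mun fin dj MC MX by (simp add: Int_commute)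
  have e4: "M (KA \<union> KB \<union> KC \<union> KX) = A + B + C + X"
  proof -
    have "M (KA \<union> KB) = A + B" using Mun fin dj MA MB by simp
    moreover have "M (KA \<union> KB \<union> KC) = A + B + C"
      using Mun[of "KA \<union> KB" KC] fin dj calculation MC by (simp add: Int_Un_distrib2)
    moreover have "(KA \<union> KB \<union> KC) \<inter> KX = {}" using dj by blast
    ultimately show ?thesis
      using Mun[of "KA \<union> KB \<union> KC" KX] fin MX by simp
  qed
  have e5: "M (KA \<union> KB \<union> KX) = A + B + X"
  proof -
    have "M (KA \<union> KB) = A + B" using Mun fin dj MA MB by simp
    moreover have "(KA \<union> KB) \<inter> KX = {}" using dj by blast
    ultimately show ?thesis
      using Mun[of "KA \<union> KB" KX] fin MX by simp
  qed
  have e6: "M (KB \<union> KC \<union> KX) = B + C + X"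
  proof -
    have "M (KB \<union> KC) = B + C" using Mun fin dj MB MC by simp
    moreover have "(KB \<union> KC) \<inter> KX = {}" using dj by blast
    ultimately show ?thesis
      using Mun[of "KB \<union> KC" KX] fin MX by simp
  qed
  have e7: "M (KC \<union> KA \<union> KX) = C + A + X"
  proof -
    have "M (KC \<union> KA) = C + A" using Mun fin dj MC MA by (simp add: Int_commute)
    moreover have "(KC \<union> KA) \<inter> KX = {}" using dj by blast
    ultimately show ?thesis
      using Mun[of "KC \<union> KA" KX] fin MX by simp
  qed
  show ?thesis
    using main_comb[OF fin dj, of u] unfolding M_def[symmetric]
    unfolding e1 e2 e3 e4 e5 e6 e7 MX .
qed

end
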